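(* Let $P$ be a finite poset. If $\mathcal{J}$ is a poset ideal in $\mathrm{Hom}(P,\mathbb{N})$, then $\overline{\Lambda}\mathcal{J}=\{\overline{\Lambda}\phi:\phi\in\mathcal{J}\}$ is a poset ideal in $\mathbb{N}P$, i.e. every monomial dividing a monomial in $\overline{\Lambda}\mathcal{J}$ lies in $\overline{\Lambda}\mathcal{J}$.
   Context: $\mathbb{N}=\{0,1,\dots\}$; $\mathrm{Hom}(P,\mathbb{N})$ is the set of isotone maps $P\to\mathbb{N}$ ordered pointwise; a poset ideal is a down-closed subset. $\mathbb{N}P$ is the monoid of formal sums $\sum_{p\in P}n_pp$, $n_p\in\mathbb{N}$, ordered componentwise, identified with the monomials of $k[x_P]$ ($k$ a field) ordered by divisibility. The ascent is $\Lambda\phi=\{(p,i):\phi(q)\le i<\phi(p)\ \forall q<p\}$ and $\overline{\Lambda}\phi=\sum_{(p,i)\in\Lambda\phi}p\in\mathbb{N}P$, i.e. the monomial $\prod_{(p,i)\in\Lambda\phi}x_p$. *)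

theory Defs
  imports Main "HOL-Library.Multiset"
begin

text \<open>A finite poset is represented by a finite carrier set P inside an ordered type.
  Hom(P,N): isotone maps P \<rightarrow> N, represented extensionally (value 0 outside P).\<close>
definition hom_poset :: "'a::order set \<Rightarrow> ('a \<Rightarrow> nat) set" where
  "hom_poset P = {\<phi>. (\<forall>p\<in>P. \<forall>q\<in>P. p \<le> q \<longrightarrow> \<phi> p \<le> \<phi> q) \<and> (\<forall>x. x \<notin> P \<longrightarrow> \<phi> x = 0)}"

definition hom_le :: "'a::order set \<Rightarrow> ('a \<Rightarrow> nat) \<Rightarrow> ('a \<Rightarrow> nat) \<Rightarrow> bool" where
  "hom_le P \<psi> \<phi> \<longleftrightarrow> (\<forall>p\<in>P. \<psi> p \<le> \<phi> p)"

definition hom_ideal :: "'a::order set \<Rightarrow> ('a \<Rightarrow> nat) set \<Rightarrow> bool" where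
  "hom_ideal P J \<longleftrightarrow> J \<subseteq> hom_poset P \<and>
     (\<forall>\<phi>\<in>J. \<forall>\<psi>\<in>hom_poset P. hom_le P \<psi> \<phi> \<longrightarrow> \<psi> \<in> J)"

definition ascent :: "'a::order set \<Rightarrow> ('a \<Rightarrow> nat) \<Rightarrow> ('a \<times> nat) set" where
  "ascent P \<phi> = {(p, i). p \<in> P \<and> (\<forall>q\<in>P. q < p \<longrightarrow> \<phi> q \<le> i) \<and> i < \<phi> p}"

definition ascent_bar :: "'a::order set \<Rightarrow> ('a \<Rightarrow> nat) \<Rightarrow> 'a multiset" where
  "ascent_bar P \<phi> = (\<Sum>(p, i)\<in>ascent P \<phi>. {#p#})"

text \<open>NP: multisets supported on P, ordered by sub-multiset (divisibility of monomials).\<close>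
definition NP :: "'a set \<Rightarrow> 'a multiset set" where
  "NP P = {m. set_mset m \<subseteq> P}"

definition NP_ideal :: "'a set \<Rightarrow> 'a multiset set \<Rightarrow> bool" where
  "NP_ideal P I \<longleftrightarrow> I \<subseteq> NP P \<and> (\<forall>M\<in>I. \<forall>m. m \<subseteq># M \<longrightarrow> m \<in> I)"

end

theory Submission
  imports Defs
begin

definition mx :: "'a::order set \<Rightarrow> ('a \<Rightarrow> nat) \<Rightarrow> 'a \<Rightarrow> nat" where
  "mx P \<phi> p = Max (insert 0 (\<phi> ` {q\<in>P. q < p}))"

lemma mx_ge: "finite P \<Longrightarrow> q \<in> P \<Longrightarrow> q < p \<Longrightarrow> \<phi> q \<le> mx P \<phi> p"
  unfolding mx_def by (intro Max_ge) auto

lemma mx_le_iff: "finite P \<Longrightarrow> (mx P \<phi> p \<le> i) = (\<forall>q\<in>P. q < p \<longrightarrow> \<phi> q \<le> i)"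
  unfolding mx_def by (subst Max_le_iff) auto

lemma count_ab:
  assumes "finite P"
  shows "count (ascent_bar P \<phi>) p = (if p \<in> P then \<phi> p - mx P \<phi> p else 0)"
proof -
  have fin: "finite (ascent P \<phi>)"
    by (rule finite_subset[of _ "Sigma P (\<lambda>p. {..<\<phi> p})"]) (auto simp: ascent_def assms)
  have "count (ascent_bar P \<phi>) p = (\<Sum>x\<in>ascent P \<phi>. count (case x of (q, i) \<Rightarrow> {#q#}) p)"
    unfolding ascent_bar_def by (rule count_sum)
  also have "\<dots> = (\<Sum>x\<in>ascent P \<phi>. if fst x = p then 1 else 0)"
    by (rule sum.cong) auto
  also have "\<dots> = card {x\<in>ascent P \<phi>. fst x = p}"
    using fin by (simp add: sum.If_cases Int_def)
  also have "{x\<in>ascent P \<phi>. fst x = p} = (\<lambda>i. (p, i)) ` (if p \<in> P then {mx P \<phi> p..<\<phi> p} else {})"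
    using mx_le_iff[OF assms, of \<phi> p] by (auto simp: ascent_def image_iff)
  also have "card \<dots> = (if p \<in> P then \<phi> p - mx P \<phi> p else 0)"
    by (subst card_image) (auto simp: inj_on_def)
  finally show ?thesis .
qed

definition chainsb :: "'a::order set \<Rightarrow> 'a \<Rightarrow> 'a set set" where
  "chainsb P y = {C. C \<subseteq> {q\<in>P. q \<le> y} \<and> (\<forall>a\<in>C. \<forall>b\<in>C. a \<le> b \<or> b \<le> a)}"

lemma chain_max:
  fixes C :: "'a::order set"
  assumes "finite C" "C \<noteq> {}" "\<forall>a\<in>C. \<forall>b\<in>C. a \<le> b \<or> b \<le> a"
  shows "\<exists>z\<in>C. \<forall>a\<in>C. a \<le> z"
  using assms
proof (induction C rule: finite_ne_induct)
  case (singleton x) then show ?case by auto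
next
  case (insert x F)
  then obtain z where z: "z \<in> F" "\<forall>a\<in>F. a \<le> z" by auto
  show ?case
  proof (cases "x \<le> z")
    case True then show ?thesis using z by auto
  next
    case False
    then have "z \<le> x" using insert.prems z by auto
    then show ?thesis using z order_trans by auto
  qed
qed

lemma finite_chainsb: "finite P \<Longrightarrow> finite (chainsb P y)"
  unfolding chainsb_def by (rule finite_subset[of _ "Pow P"]) auto

lemma key_bound:
  assumes "finite P" "\<phi> \<in> hom_poset P"
  shows "C \<in> chainsb P y \<Longrightarrow> y \<in> P \<Longrightarrow> (\<Sum>q\<in>C. \<phi> q - mx P \<phi> q) \<le> \<phi> y"
proof (induct "card C" arbitrary: C y rule: less_induct)
  case less
  have mono: "\<And>a b. a \<in> P \<Longrightarrow> b \<in> P \<Longrightarrow> a \<le> b \<Longrightarrow> \<phi> a \<le> \<phi> b"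
    using assms(2) by (auto simp: hom_poset_def)
  have "C \<subseteq> P" using less.prems(1) by (auto simp: chainsb_def)
  then have finC: "finite C" using assms(1) by (rule finite_subset)
  show ?case
  proof (cases "C = {}")
    case True then show ?thesis by simp
  next
    case False
    have ch: "\<forall>a\<in>C. \<forall>b\<in>C. a \<le> b \<or> b \<le> a" and sub: "C \<subseteq> {q\<in>P. q \<le> y}"
      using less.prems by (auto simp: chainsb_def)
    obtain z where z: "z \<in> C" "\<forall>a\<in>C. a \<le> z" using chain_max[OF finC False ch] by auto
    have zP: "z \<in> P" "z \<le> y" using z sub by auto
    have mxz: "mx P \<phi> z \<le> \<phi> z"
      using mx_le_iff[OF assms(1), of \<phi> z \<open>\<phi> z\<close>] mono zP by auto
    have split: "(\<Sum>q\<in>C. \<phi> q - mx P \<phi> q) = (\<phi> z - mx P \<phi> z) + (\<Sum>q\<in>C-{z}. \<phi> q - mx P \<phi> q)"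
      using finC z(1) by (simp add: sum.remove)
    have rest: "(\<Sum>q\<in>C-{z}. \<phi> q - mx P \<phi> q) \<le> mx P \<phi> z"
    proof (cases "C - {z} = {}")
      case True show ?thesis unfolding True by simp
    next
      case False
      have f2: "finite (C - {z})" using finC by simp
      have c2: "\<forall>a\<in>C-{z}. \<forall>b\<in>C-{z}. a \<le> b \<or> b \<le> a" using ch by blast
      obtain z' where z': "z' \<in> C - {z}" "\<forall>a\<in>C-{z}. a \<le> z'"
        using chain_max[OF f2 False c2] by blast
      have z'P: "z' \<in> P" using z' sub by blast
      have "z' \<le> z" "z' \<noteq> z" using z' z by auto
      then have z'z: "z' < z" by (simp add: less_le)
      have ch2: "C - {z} \<in> chainsb P z'" using z' sub c2 unfolding chainsb_def by auto
      have cl: "card (C - {z}) < card C" using finC z(1) by (rule card_Diff1_less)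
      have "(\<Sum>q\<in>C-{z}. \<phi> q - mx P \<phi> q) \<le> \<phi> z'" by (rule less.hyps[OF cl ch2 z'P])
      also have "\<dots> \<le> mx P \<phi> z" using mx_ge[OF assms(1) z'P z'z] .
      finally show ?thesis .
    qed
    have "(\<Sum>q\<in>C. \<phi> q - mx P \<phi> q) \<le> \<phi> z" using split rest mxz by linarith
    also have "\<dots> \<le> \<phi> y" using mono zP less.prems(2) by auto
    finally show ?thesis .
  qed
qed


theorem proposition3p4:
  fixes P :: "'a::order set" and J :: "('a \<Rightarrow> nat) set"
  assumes "finite P"
    and "hom_ideal P J"
  shows "NP_ideal P (ascent_bar P ` J)"
proof -
  have hp: "J \<subseteq> hom_poset P"
    and dc: "\<And>\<phi> \<psi>. \<phi> \<in> J \<Longrightarrow> \<psi> \<in> hom_poset P \<Longrightarrow> hom_le P \<psi> \<phi> \<Longrightarrow> \<psi> \<in> J"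
    using assms(2) unfolding hom_ideal_def by blast+
  have fP: "finite P" by (rule assms(1))
  show ?thesis unfolding NP_ideal_def
  proof (intro conjI ballI allI impI)
    show "ascent_bar P ` J \<subseteq> NP P"
    proof
      fix M assume "M \<in> ascent_bar P ` J"
      then obtain \<phi> where "M = ascent_bar P \<phi>" by blast
      have "set_mset M \<subseteq> P"
      proof
        fix x assume "x \<in># M"
        then have "count M x > 0" by simp
        then show "x \<in> P" using count_ab[OF fP, of \<phi> x] \<open>M = _\<close> by (auto split: if_splits)
      qed
      then show "M \<in> NP P" by (simp add: NP_def)
    qed
  next
    fix M m assume Min: "M \<in> ascent_bar P ` J" and sub: "m \<subseteq># M"
    obtain \<phi> where phJ: "\<phi> \<in> J" and Meq: "M = ascent_bar P \<phi>" using Min by blast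
    have phH: "\<phi> \<in> hom_poset P" using phJ hp by blast
    define c where "c = count m"
    define \<psi> where "\<psi> = (\<lambda>y. if y \<in> P then Max ((\<lambda>C. sum c C) ` chainsb P y) else 0)"
    have cle: "\<And>q. c q \<le> (if q \<in> P then \<phi> q - mx P \<phi> q else 0)"
    proof -
      fix q
      have "count m q \<le> count M q" by (rule mset_subset_eq_count[OF sub])
      then show "c q \<le> (if q \<in> P then \<phi> q - mx P \<phi> q else 0)"
        using count_ab[OF fP, of \<phi> q] Meq unfolding c_def by simp
    qed
    have emp: "\<And>y. {} \<in> chainsb P y" by (simp add: chainsb_def)
    have psi_ge: "\<And>y C. y \<in> P \<Longrightarrow> C \<in> chainsb P y \<Longrightarrow> sum c C \<le> \<psi> y"
    proof -
      fix y C assume a: "y \<in> P" "C \<in> chainsb P y"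
      have "sum c C \<le> Max ((\<lambda>C. sum c C) ` chainsb P y)"
        using finite_chainsb[OF fP] a(2) by (intro Max_ge) auto
      then show "sum c C \<le> \<psi> y" using a(1) by (simp add: \<psi>_def)
    qed
    have psi_obt: "\<And>y. y \<in> P \<Longrightarrow> \<exists>C\<in>chainsb P y. \<psi> y = sum c C"
    proof -
      fix y assume "y \<in> P"
      have "Max ((\<lambda>C. sum c C) ` chainsb P y) \<in> (\<lambda>C. sum c C) ` chainsb P y"
        using finite_chainsb[OF fP] emp by (intro Max_in) auto
      then show "\<exists>C\<in>chainsb P y. \<psi> y = sum c C" unfolding \<psi>_def using \<open>y \<in> P\<close> by auto
    qed
    have hom: "\<psi> \<in> hom_poset P"
      unfolding hom_poset_def
    proof (intro CollectI conjI ballI impI allI)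
      fix x y assume xy: "x \<in> P" "y \<in> P" "x \<le> y"
      obtain C where C: "C \<in> chainsb P x" "\<psi> x = sum c C" using psi_obt xy(1) by blast
      have "C \<in> chainsb P y" using C(1) order.trans[OF _ xy(3)] unfolding chainsb_def by blast
      then show "\<psi> x \<le> \<psi> y" using C(2) psi_ge xy(2) by simp
    next
      fix x :: 'a assume "x \<notin> P" then show "\<psi> x = 0" by (simp add: \<psi>_def)
    qed
    have le: "hom_le P \<psi> \<phi>"
      unfolding hom_le_def
    proof
      fix y assume yP: "y \<in> P"
      obtain C where C: "C \<in> chainsb P y" "\<psi> y = sum c C" using psi_obt yP by blast
      have CP: "C \<subseteq> P" using C(1) by (auto simp: chainsb_def)
      have "sum c C \<le> (\<Sum>q\<in>C. \<phi> q - mx P \<phi> q)"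
      proof (rule sum_mono)
        fix q assume "q \<in> C"
        then have "q \<in> P" using CP by blast
        then show "c q \<le> \<phi> q - mx P \<phi> q" using cle[of q] by simp
      qed
      also have "\<dots> \<le> \<phi> y" using key_bound[OF fP phH C(1) yP] .
      finally show "\<psi> y \<le> \<phi> y" using C(2) by simp
    qed
    have psJ: "\<psi> \<in> J" using dc[OF phJ hom le] .
    have "ascent_bar P \<psi> = m"
    proof (rule multiset_eqI)
      fix p
      show "count (ascent_bar P \<psi>) p = count m p"
      proof (cases "p \<in> P")
        case False
        then show ?thesis using count_ab[OF fP, of \<psi> p] cle[of p] unfolding c_def by simp
      next
        case pP: True
        have ge: "c p + mx P \<psi> p \<le> \<psi> p"
        proof -
          have "mx P \<psi> p \<in> insert 0 (\<psi> ` {q\<in>P. q < p})"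
            unfolding mx_def using fP by (intro Max_in) auto
          then consider "mx P \<psi> p = 0" | q where "q \<in> P" "q < p" "mx P \<psi> p = \<psi> q" by auto
          then show ?thesis
          proof cases
            case 1
            have "{p} \<in> chainsb P p" using pP by (simp add: chainsb_def)
            then have "sum c {p} \<le> \<psi> p" by (rule psi_ge[OF pP])
            then show ?thesis using 1 by simp
          next
            case 2
            obtain C where C: "C \<in> chainsb P q" "\<psi> q = sum c C" using psi_obt 2(1) by blast
            have CP: "C \<subseteq> P" and Cq: "\<forall>a\<in>C. a \<le> q" and ch: "\<forall>a\<in>C. \<forall>b\<in>C. a \<le> b \<or> b \<le> a"
              using C(1) by (auto simp: chainsb_def)
            have Cp: "\<forall>a\<in>C. a < p" using Cq 2(2) le_less_trans by blast
            then have pn: "p \<notin> C" by blast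
            have finC: "finite C" using CP fP finite_subset by blast
            have "insert p C \<in> chainsb P p"
              using CP Cp ch pP unfolding chainsb_def by (auto simp: less_imp_le)
            then have "sum c (insert p C) \<le> \<psi> p" using psi_ge[OF pP] by blast
            moreover have "sum c (insert p C) = c p + sum c C" using finC pn by simp
            ultimately show ?thesis using 2(3) C(2) by simp
          qed
        qed
        have le2: "\<psi> p \<le> c p + mx P \<psi> p"
        proof -
          obtain C where C: "C \<in> chainsb P p" "\<psi> p = sum c C" using psi_obt pP by blast
          have CP: "C \<subseteq> P" and Cq: "\<forall>a\<in>C. a \<le> p" and ch: "\<forall>a\<in>C. \<forall>b\<in>C. a \<le> b \<or> b \<le> a"
            using C(1) by (auto simp: chainsb_def)
          have finC: "finite C" using CP fP finite_subset by blast
          have s1: "sum c C \<le> c p + sum c (C - {p})"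
          proof (cases "p \<in> C")
            case True then show ?thesis using finC by (simp add: sum.remove)
          next
            case False then show ?thesis by simp
          qed
          have s2: "sum c (C - {p}) \<le> mx P \<psi> p"
          proof (cases "C - {p} = {}")
            case True show ?thesis unfolding True by simp
          next
            case False
            have f2: "finite (C - {p})" using finC by simp
            have c2: "\<forall>a\<in>C-{p}. \<forall>b\<in>C-{p}. a \<le> b \<or> b \<le> a" using ch by blast
            obtain z where z: "z \<in> C - {p}" "\<forall>a\<in>C-{p}. a \<le> z"
              using chain_max[OF f2 False c2] by blast
            have zP: "z \<in> P" using z CP by blast
            have "z \<le> p" "z \<noteq> p" using z Cq by auto
            then have zp: "z < p" by (simp add: less_le)
            have ch2: "C - {p} \<in> chainsb P z" using z CP c2 unfolding chainsb_def by auto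
            have "sum c (C - {p}) \<le> \<psi> z" using psi_ge[OF zP ch2] .
            also have "\<dots> \<le> mx P \<psi> p" using mx_ge[OF fP zP zp] .
            finally show ?thesis .
          qed
          show ?thesis using C(2) s1 s2 by simp
        qed
        have "\<psi> p = c p + mx P \<psi> p" using ge le2 by simp
        then show ?thesis using count_ab[OF fP, of \<psi> p] pP unfolding c_def by simp
      qed
    qed
    then show "m \<in> ascent_bar P ` J" using psJ by blast
  qed
qed

end
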